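(* Let $n\ge1$. For every assertion $\varphi$, every environment $\eta$ of ordinary variables, every $\rho:\mathsf{AVar}\to\mathsf{IRel}_1$ and every $\rho':\mathsf{AVar}\to\mathsf{IRel}_n$ such that $\Delta_n(\rho(a))=\rho'(a)$ for all $a\in\mathsf{AVar}$, we have $\Delta_n([\![\varphi]\!]^1_{\eta,\rho})=[\![\varphi]\!]^n_{\eta,\rho'}$.
   Context: $\mathsf{Heap}$ is the set of finite partial functions from $\mathsf{PosInt}$ to $\mathsf{Int}$; $[]$ is the empty heap; $h\cdot g$ is the union of heaps with disjoint domains; $g\sqsubseteq h$ means $h$ extends $g$. On $\mathsf{Heap}^n$, $\sqsubseteq$ and $\cdot$ are componentwise. $\mathsf{IRel}_n$ is the set of $\sqsubseteq$-upward closed subsets of $\mathsf{Heap}^n$. For $p,q\in\mathsf{IRel}_n$, $p*q=\{\mathbf f\cdot\mathbf g\mid\mathbf f\in p,\mathbf g\in q,\text{ componentwise disjoint domains}\}$. For $X\subseteq\mathsf{Heap}$, $\Delta_n(X)=\{(h_1,\dots,h_n)\mid\exists f\in X.\ f\sqsubseteq h_k\text{ for all }k\}$. Assertions are built from primitive assertions $P$ (such as $E\hookrightarrow F$ for integer expressions $E,F$, and heap-independent boolean conditions), assertion variables $a\in\mathsf{AVar}$, $\mathsf{true}$, $\mathsf{false}$, $\wedge$, $\vee$, $*$, and quantifiers $\exists x,\forall x$ over ordinary integer variables (no implication or separating implication). An environment $\eta$ maps ordinary variables to integers; each primitive $P$ has a meaning $[\![P]\!]^{\mathrm{prim}}_\eta\subseteq\mathsf{Heap}$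 (e.g. $E\hookrightarrow F$ denotes the heaps $h$ with $[\![E]\!]_\eta\in\operatorname{dom}(h)$ and $h([\![E]\!]_\eta)=[\![F]\!]_\eta$). Given $\eta$ and $\rho:\mathsf{AVar}\to\mathsf{IRel}_n$, the $n$-ary meaning $[\![\varphi]\!]^n_{\eta,\rho}\in\mathsf{IRel}_n$ is: $[\![P]\!]^n=\Delta_n([\![P]\!]^{\mathrm{prim}}_\eta)$, $[\![a]\!]^n=\rho(a)$, $[\![\mathsf{true}]\!]^n=\mathsf{Heap}^n$, $[\![\mathsf{false}]\!]^n=\emptyset$, $\wedge,\vee,*$ are interpreted by $\cap,\cup,*$, $\exists x$ by the union over $v\in\mathsf{Int}$ of the meanings under $\eta[x\mapsto v]$, and $\forall x$ by the corresponding intersection. *)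

theory Defs
  imports Main
begin

typedef heap = "{h :: int \<rightharpoonup> int. finite (dom h) \<and> dom h \<subseteq> {0<..}}"
  by (rule exI[of _ Map.empty]) simp

definition heap_empty :: heap where
  "heap_empty = Abs_heap Map.empty"

definition heap_le :: "heap \<Rightarrow> heap \<Rightarrow> bool" where
  "heap_le g h \<longleftrightarrow> Rep_heap g \<subseteq>\<^sub>m Rep_heap h"

definition heap_disj :: "heap \<Rightarrow> heap \<Rightarrow> bool" where
  "heap_disj f g \<longleftrightarrow> dom (Rep_heap f) \<inter> dom (Rep_heap g) = {}"

text \<open>Union of heaps (meaningful for disjoint domains).\<close>
definition heap_union :: "heap \<Rightarrow> heap \<Rightarrow> heap" where
  "heap_union f g = Abs_heap (Rep_heap f ++ Rep_heap g)"

definition HeapN :: "nat \<Rightarrow> heap list set" where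
  "HeapN n = {hs. length hs = n}"

definition heapN_le :: "heap list \<Rightarrow> heap list \<Rightarrow> bool" where
  "heapN_le gs hs \<longleftrightarrow> length gs = length hs \<and> (\<forall>k < length hs. heap_le (gs ! k) (hs ! k))"

definition IRel :: "nat \<Rightarrow> heap list set set" where
  "IRel n = {p. p \<subseteq> HeapN n \<and> (\<forall>gs hs. gs \<in> p \<longrightarrow> heapN_le gs hs \<longrightarrow> hs \<in> p)}"

definition sep_star :: "nat \<Rightarrow> heap list set \<Rightarrow> heap list set \<Rightarrow> heap list set" where
  "sep_star n p q = {map2 heap_union fs gs | fs gs.
      fs \<in> p \<and> gs \<in> q \<and> length fs = n \<and> length gs = n \<and>
      (\<forall>k < n. heap_disj (fs ! k) (gs ! k))}"

definition Delta :: "nat \<Rightarrow> heap set \<Rightarrow> heap list set" where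
  "Delta n X = {hs. length hs = n \<and> (\<exists>f \<in> X. \<forall>k < n. heap_le f (hs ! k))}"

definition unary :: "heap list set \<Rightarrow> heap set" where
  "unary S = {h. [h] \<in> S}"

datatype ('p, 'v, 'a) assn =
    Prim 'p
  | AVar 'a
  | ATrue
  | AFalse
  | AAnd "('p, 'v, 'a) assn" "('p, 'v, 'a) assn"
  | AOr "('p, 'v, 'a) assn" "('p, 'v, 'a) assn"
  | AStar "('p, 'v, 'a) assn" "('p, 'v, 'a) assn"
  | AEx 'v "('p, 'v, 'a) assn"
  | AAll 'v "('p, 'v, 'a) assn"

fun sem :: "('p \<Rightarrow> ('v \<Rightarrow> int) \<Rightarrow> heap set) \<Rightarrow> nat \<Rightarrow> ('v \<Rightarrow> int) \<Rightarrow>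
    ('a \<Rightarrow> heap list set) \<Rightarrow> ('p, 'v, 'a) assn \<Rightarrow> heap list set" where
  "sem prim n \<eta> \<rho> (Prim P) = Delta n (prim P \<eta>)"
| "sem prim n \<eta> \<rho> (AVar a) = \<rho> a"
| "sem prim n \<eta> \<rho> ATrue = HeapN n"
| "sem prim n \<eta> \<rho> AFalse = {}"
| "sem prim n \<eta> \<rho> (AAnd \<phi> \<psi>) = sem prim n \<eta> \<rho> \<phi> \<inter> sem prim n \<eta> \<rho> \<psi>"
| "sem prim n \<eta> \<rho> (AOr \<phi> \<psi>) = sem prim n \<eta> \<rho> \<phi> \<union> sem prim n \<eta> \<rho> \<psi>"
| "sem prim n \<eta> \<rho> (AStar \<phi> \<psi>) = sep_star n (sem prim n \<eta> \<rho> \<phi>) (sem prim n \<eta> \<rho> \<psi>)"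
| "sem prim n \<eta> \<rho> (AEx x \<phi>) = (\<Union>v. sem prim n (\<eta>(x := v)) \<rho> \<phi>)"
| "sem prim n \<eta> \<rho> (AAll x \<phi>) = (\<Inter>v. sem prim n (\<eta>(x := v)) \<rho> \<phi>)"

end

theory Submission
  imports Defs
begin

lemma Rep_heap_fin: "finite (dom (Rep_heap h))" and Rep_heap_pos: "dom (Rep_heap h) \<subseteq> {0<..}"
  using Rep_heap[of h] by auto

lemma Rep_restrict: "Rep_heap (Abs_heap (Rep_heap h |` A)) = Rep_heap h |` A"
  apply (rule Abs_heap_inverse)
  using Rep_heap_fin[of h] Rep_heap_pos[of h]
  by (auto intro: finite_subset)

lemma Rep_union: "Rep_heap (heap_union f g) = Rep_heap f ++ Rep_heap g"
  unfolding heap_union_def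
  apply (rule Abs_heap_inverse)
  using Rep_heap_fin[of f] Rep_heap_pos[of f] Rep_heap_fin[of g] Rep_heap_pos[of g]
  by auto

lemma Rep_empty: "Rep_heap heap_empty = Map.empty"
  unfolding heap_empty_def by (rule Abs_heap_inverse) auto

lemma heap_le_refl: "heap_le f f" unfolding heap_le_def by simp
lemma heap_le_trans: "heap_le f g \<Longrightarrow> heap_le g h \<Longrightarrow> heap_le f h"
  unfolding heap_le_def using map_le_trans by blast
lemma heap_le_empty: "heap_le heap_empty h" unfolding heap_le_def Rep_empty by simp

definition hsplit :: "heap \<Rightarrow> heap \<Rightarrow> heap" where
  "hsplit f h = Abs_heap (Rep_heap h |` (- dom (Rep_heap f)))"

lemma hsplit_union: "heap_le f h \<Longrightarrow> heap_union f (hsplit f h) = h"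
  unfolding heap_le_def hsplit_def
  apply (rule Rep_heap_inject[THEN iffD1])
  apply (simp add: Rep_union Rep_restrict)
  apply (rule ext)
  by (auto simp: map_add_def restrict_map_def map_le_def split: option.splits)

lemma hsplit_disj: "heap_disj f (hsplit f h)"
  unfolding heap_disj_def hsplit_def Rep_restrict by auto

lemma hsplit_le: "heap_disj f g \<Longrightarrow> heap_le (heap_union f g) h \<Longrightarrow> heap_le g (hsplit f h)"
  unfolding heap_le_def hsplit_def heap_disj_def Rep_restrict Rep_union map_le_def
proof (intro ballI)
  fix a assume d: "dom (Rep_heap f) \<inter> dom (Rep_heap g) = {}"
    and le: "\<forall>a\<in>dom (Rep_heap f ++ Rep_heap g). (Rep_heap f ++ Rep_heap g) a = Rep_heap h a"
    and a: "a \<in> dom (Rep_heap g)"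
  have "a \<notin> dom (Rep_heap f)" using d a by auto
  moreover have "(Rep_heap f ++ Rep_heap g) a = Rep_heap g a" using a by (auto simp: map_add_def)
  moreover have "a \<in> dom (Rep_heap f ++ Rep_heap g)" using a by auto
  ultimately show "Rep_heap g a = (Rep_heap h |` (- dom (Rep_heap f))) a"
    using le by (auto simp: restrict_map_def)
qed

lemma union_le_left: "heap_disj f g \<Longrightarrow> heap_le f (heap_union f g)"
  unfolding heap_le_def heap_disj_def Rep_union map_le_def
proof (intro ballI)
  fix a assume d: "dom (Rep_heap f) \<inter> dom (Rep_heap g) = {}" and a: "a \<in> dom (Rep_heap f)"
  then have "Rep_heap g a = None" by blast
  then show "Rep_heap f a = (Rep_heap f ++ Rep_heap g) a" by (simp add: map_add_def)
qed

lemma union_mono: "heap_disj F G \<Longrightarrow> heap_le f F \<Longrightarrow> heap_le g G \<Longrightarrow> heap_le (heap_union f g) (heap_union F G)"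
  unfolding heap_le_def heap_disj_def Rep_union map_le_def
proof (intro ballI)
  fix a assume d: "dom (Rep_heap F) \<inter> dom (Rep_heap G) = {}"
    and f: "\<forall>a\<in>dom (Rep_heap f). Rep_heap f a = Rep_heap F a"
    and g: "\<forall>a\<in>dom (Rep_heap g). Rep_heap g a = Rep_heap G a"
    and a: "a \<in> dom (Rep_heap f ++ Rep_heap g)"
  show "(Rep_heap f ++ Rep_heap g) a = (Rep_heap F ++ Rep_heap G) a"
  proof (cases "a \<in> dom (Rep_heap g)")
    case True
    have e: "Rep_heap g a = Rep_heap G a" using g True by blast
    then have "a \<in> dom (Rep_heap G)" using True by (simp add: domIff)
    then have "(Rep_heap F ++ Rep_heap G) a = Rep_heap G a" by (rule map_add_dom_app_simps(1))
    moreover have "(Rep_heap f ++ Rep_heap g) a = Rep_heap g a" using True by (rule map_add_dom_app_simps(1))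
    ultimately show ?thesis using e by simp
  next
    case False
    have l: "(Rep_heap f ++ Rep_heap g) a = Rep_heap f a" using False by (rule map_add_dom_app_simps(3))
    have "a \<in> dom (Rep_heap f)" using a False by (simp add: dom_map_add)
    then have e: "Rep_heap f a = Rep_heap F a" using f by blast
    have "a \<in> dom (Rep_heap F)" using \<open>a \<in> dom (Rep_heap f)\<close> e by (simp add: domIff)
    then have "a \<notin> dom (Rep_heap G)" using d by blast
    then have "(Rep_heap F ++ Rep_heap G) a = Rep_heap F a" by (rule map_add_dom_app_simps(3))
    then show ?thesis using l e by simp
  qed
qed

lemma disj_mono: "heap_disj F G \<Longrightarrow> heap_le f F \<Longrightarrow> heap_le g G \<Longrightarrow> heap_disj f g"
  unfolding heap_le_def heap_disj_def
  using map_le_implies_dom_le by blast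

lemma glue:
  assumes "\<forall>i\<in>I. heap_le (F i) h0"
  shows "\<exists>g. (\<forall>i\<in>I. heap_le (F i) g) \<and> (\<forall>h. (\<forall>i\<in>I. heap_le (F i) h) \<longrightarrow> heap_le g h)"
proof -
  define D where "D = (\<Union>i\<in>I. dom (Rep_heap (F i)))"
  define g where "g = Abs_heap (Rep_heap h0 |` D)"
  have Rg: "Rep_heap g = Rep_heap h0 |` D" unfolding g_def by (rule Rep_restrict)
  have 1: "\<forall>i\<in>I. heap_le (F i) g"
    unfolding heap_le_def Rg map_le_def
  proof (intro ballI)
    fix i x assume i: "i \<in> I" and x: "x \<in> dom (Rep_heap (F i))"
    have "x \<in> D" using i x unfolding D_def by blast
    moreover have "Rep_heap (F i) x = Rep_heap h0 x"
      using assms i x unfolding heap_le_def map_le_def by blast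
    ultimately show "Rep_heap (F i) x = (Rep_heap h0 |` D) x" by simp
  qed
  have 2: "heap_le g h" if "\<forall>i\<in>I. heap_le (F i) h" for h
  proof -
    { fix x assume "x \<in> dom (Rep_heap g)"
      then have "x \<in> D" unfolding Rg by (simp add: dom_def restrict_map_def split: if_splits)
      then obtain i where i: "i \<in> I" "x \<in> dom (Rep_heap (F i))" unfolding D_def by auto
      then have "Rep_heap g x = Rep_heap (F i) x" using 1 unfolding heap_le_def map_le_def by metis
      also have "\<dots> = Rep_heap h x" using that i unfolding heap_le_def map_le_def by blast
      finally have "Rep_heap g x = Rep_heap h x" . }
    then show ?thesis unfolding heap_le_def map_le_def by blast
  qed
  show ?thesis using 1 2 by blast
qed

definition upc :: "heap set \<Rightarrow> bool" where
  "upc X \<longleftrightarrow> (\<forall>f g. f \<in> X \<longrightarrow> heap_le f g \<longrightarrow> g \<in> X)"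

lemma unary_Delta1: "unary (Delta (Suc 0) X) = {h. \<exists>f\<in>X. heap_le f h}"
  unfolding unary_def Delta_def by auto

lemma unary_star: "unary (sep_star (Suc 0) p q) =
   {heap_union f g | f g. f \<in> unary p \<and> g \<in> unary q \<and> heap_disj f g}"
proof -
  have "[h] \<in> sep_star (Suc 0) p q \<longleftrightarrow> (\<exists>f g. h = heap_union f g \<and> [f] \<in> p \<and> [g] \<in> q \<and> heap_disj f g)" for h
    unfolding sep_star_def
    apply (rule iffI)
     apply (clarsimp simp: length_Suc_conv)
     apply blast
    apply (elim exE conjE)
    apply (simp only: mem_Collect_eq)
    subgoal for f g
      apply (rule exI[of _ "[f]"], rule exI[of _ "[g]"])
      by simp
    done
  then show ?thesis unfolding unary_def by auto
qed

lemma star_upc: "upc A \<Longrightarrow> upc B \<Longrightarrow> upc {heap_union f g | f g. f \<in> A \<and> g \<in> B \<and> heap_disj f g}"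
  unfolding upc_def
proof (intro allI impI)
  fix h h'
  assume uA: "\<forall>f g. f \<in> A \<longrightarrow> heap_le f g \<longrightarrow> g \<in> A"
    and uB: "\<forall>f g. f \<in> B \<longrightarrow> heap_le f g \<longrightarrow> g \<in> B"
    and h: "h \<in> {heap_union f g | f g. f \<in> A \<and> g \<in> B \<and> heap_disj f g}"
    and le: "heap_le h h'"
  from h obtain f g where fg: "h = heap_union f g" "f \<in> A" "g \<in> B" "heap_disj f g" by blast
  have le': "heap_le (heap_union f g) h'" using le fg by simp
  have fl: "heap_le f h'" using heap_le_trans[OF union_le_left[OF fg(4)] le'] .
  have "h' = heap_union f (hsplit f h')" using hsplit_union[OF fl] by simp
  moreover have "hsplit f h' \<in> B" using uB fg(3) hsplit_le[OF fg(4) le'] by blast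
  ultimately show "h' \<in> {heap_union f g | f g. f \<in> A \<and> g \<in> B \<and> heap_disj f g}"
    using fg(2) hsplit_disj[of f h'] by blast
qed

lemma sem1_upc:
  assumes "\<And>a. \<rho> a \<in> IRel 1"
  shows "upc (unary (sem prim 1 \<eta> \<rho> \<phi>))"
  using assms
proof (induction \<phi> arbitrary: \<eta>)
  case (Prim x) then show ?case unfolding upc_def
    by (simp add: unary_Delta1) (meson heap_le_trans)
next
  case (AVar a)
  show ?case unfolding upc_def unary_def
  proof (intro allI impI)
    fix f g assume f: "f \<in> {h. [h] \<in> sem prim 1 \<eta> \<rho> (AVar a)}" and le: "heap_le f g"
    have "heapN_le [f] [g]" using le by (simp add: heapN_le_def)
    moreover have "[f] \<in> \<rho> a" using f by simp
    ultimately have "[g] \<in> \<rho> a" using AVar[of a] unfolding IRel_def by blast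
    then show "g \<in> {h. [h] \<in> sem prim 1 \<eta> \<rho> (AVar a)}" by simp
  qed
next
  case ATrue then show ?case by (simp add: upc_def unary_def HeapN_def)
next
  case AFalse then show ?case by (simp add: upc_def unary_def)
next
  case (AAnd \<phi>1 \<phi>2)
  have "upc (unary (sem prim 1 \<eta> \<rho> \<phi>1))" "upc (unary (sem prim 1 \<eta> \<rho> \<phi>2))" using AAnd by blast+
  then show ?case unfolding upc_def unary_def by auto
next
  case (AOr \<phi>1 \<phi>2)
  have "upc (unary (sem prim 1 \<eta> \<rho> \<phi>1))" "upc (unary (sem prim 1 \<eta> \<rho> \<phi>2))" using AOr by blast+
  then show ?case unfolding upc_def unary_def by auto
next
  case (AStar \<phi>1 \<phi>2)
  have "upc (unary (sem prim 1 \<eta> \<rho> \<phi>1))" "upc (unary (sem prim 1 \<eta> \<rho> \<phi>2))" using AStar by blast+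
  then show ?case using star_upc by (simp add: unary_star)
next
  case (AEx x \<phi>)
  have IH: "\<And>v. upc (unary (sem prim 1 (\<eta>(x:=v)) \<rho> \<phi>))" using AEx by blast
  show ?case unfolding upc_def unary_def
  proof (intro allI impI)
    fix f g assume "f \<in> {h. [h] \<in> sem prim 1 \<eta> \<rho> (AEx x \<phi>)}" "heap_le f g"
    then obtain v where "f \<in> unary (sem prim 1 (\<eta>(x:=v)) \<rho> \<phi>)" "heap_le f g" by (auto simp: unary_def)
    then have "g \<in> unary (sem prim 1 (\<eta>(x:=v)) \<rho> \<phi>)" using IH[of v] unfolding upc_def by blast
    then show "g \<in> {h. [h] \<in> sem prim 1 \<eta> \<rho> (AEx x \<phi>)}" by (auto simp: unary_def)
  qed
next
  case (AAll x \<phi>)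
  have IH: "\<And>v. upc (unary (sem prim 1 (\<eta>(x:=v)) \<rho> \<phi>))" using AAll by blast
  show ?case unfolding upc_def unary_def
  proof (intro allI impI)
    fix f g assume f: "f \<in> {h. [h] \<in> sem prim 1 \<eta> \<rho> (AAll x \<phi>)}" and le: "heap_le f g"
    have "g \<in> unary (sem prim 1 (\<eta>(x:=v)) \<rho> \<phi>)" for v
    proof -
      have "f \<in> unary (sem prim 1 (\<eta>(x:=v)) \<rho> \<phi>)" using f by (auto simp: unary_def)
      then show ?thesis using IH[of v] le unfolding upc_def by blast
    qed
    then show "g \<in> {h. [h] \<in> sem prim 1 \<eta> \<rho> (AAll x \<phi>)}" by (auto simp: unary_def)
  qed
qed

lemma Delta_Inter:
  assumes "n \<ge> 1" "\<And>i. upc (X i)"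
  shows "Delta n (\<Inter>i. X i) = (\<Inter>i. Delta n (X i))"
proof
  show "Delta n (\<Inter>i. X i) \<subseteq> (\<Inter>i. Delta n (X i))" unfolding Delta_def by blast
next
  show "(\<Inter>i. Delta n (X i)) \<subseteq> Delta n (\<Inter>i. X i)"
  proof
    fix hs assume hs: "hs \<in> (\<Inter>i. Delta n (X i))"
    have len: "length hs = n" using hs unfolding Delta_def by auto
    have "\<forall>i. \<exists>f\<in>X i. \<forall>k<n. heap_le f (hs ! k)" using hs unfolding Delta_def by auto
    then obtain F where F: "\<And>i. F i \<in> X i" "\<And>i k. k < n \<Longrightarrow> heap_le (F i) (hs ! k)" by metis
    obtain g where g: "\<forall>i\<in>UNIV. heap_le (F i) g"
      "\<forall>h. (\<forall>i\<in>UNIV. heap_le (F i) h) \<longrightarrow> heap_le g h"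
      using glue[of UNIV F "hs ! 0"] F assms(1) by auto
    have "g \<in> X i" for i using assms(2)[of i] F(1)[of i] g(1) unfolding upc_def by blast
    then have "g \<in> (\<Inter>i. X i)" by blast
    moreover have "\<forall>k<n. heap_le g (hs ! k)"
    proof (intro allI impI)
      fix k assume "k < n"
      then have "\<forall>i\<in>UNIV. heap_le (F i) (hs ! k)" using F(2) by blast
      then show "heap_le g (hs ! k)" using g(2) by blast
    qed
    ultimately show "hs \<in> Delta n (\<Inter>i. X i)" using len unfolding Delta_def by blast
  qed
qed

lemma Delta_Int:
  assumes "n \<ge> 1" "upc A" "upc B"
  shows "Delta n (A \<inter> B) = Delta n A \<inter> Delta n B"
proof -
  have "A \<inter> B = (\<Inter>b. if b then A else B)" by (auto split: if_splits)
  moreover have "Delta n A \<inter> Delta n B = (\<Inter>b. Delta n (if b then A else B))"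
    by (auto split: if_splits)
  ultimately show ?thesis using Delta_Inter[of n "\<lambda>b. if b then A else B"] assms by auto
qed

lemma Delta_star:
  assumes "n \<ge> 1"
  shows "Delta n {heap_union f g | f g. f \<in> A \<and> g \<in> B \<and> heap_disj f g}
       = sep_star n (Delta n A) (Delta n B)"
proof
  show "Delta n {heap_union f g | f g. f \<in> A \<and> g \<in> B \<and> heap_disj f g} \<subseteq> sep_star n (Delta n A) (Delta n B)"
  proof
    fix hs assume "hs \<in> Delta n {heap_union f g | f g. f \<in> A \<and> g \<in> B \<and> heap_disj f g}"
    then obtain f g where len: "length hs = n" and fg: "f \<in> A" "g \<in> B" "heap_disj f g"
      and le: "\<And>k. k < n \<Longrightarrow> heap_le (heap_union f g) (hs ! k)"
      unfolding Delta_def by blast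
    define fs where "fs = replicate n f"
    define gs where "gs = map (hsplit f) hs"
    have lf: "length fs = n" "length gs = n" using len unfolding fs_def gs_def by auto
    have "fs \<in> Delta n A" unfolding fs_def Delta_def using fg(1) heap_le_refl by auto
    moreover have "gs \<in> Delta n B"
    proof -
      have "\<forall>k<n. heap_le g (gs ! k)" unfolding gs_def using fg(3) le len hsplit_le by simp
      then show ?thesis unfolding Delta_def using fg(2) lf by blast
    qed
    moreover have "hs = map2 heap_union fs gs"
    proof (rule nth_equalityI)
      show "length hs = length (map2 heap_union fs gs)" using lf len by simp
    next
      fix i assume i: "i < length hs"
      have "heap_le f (hs ! i)" using heap_le_trans[OF union_le_left[OF fg(3)] le] i len by blast
      then have "heap_union f (hsplit f (hs ! i)) = hs ! i" by (rule hsplit_union)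
      then show "hs ! i = map2 heap_union fs gs ! i" using i len unfolding fs_def gs_def by simp
    qed
    moreover have "\<forall>k<n. heap_disj (fs ! k) (gs ! k)"
      unfolding fs_def gs_def using len hsplit_disj by simp
    ultimately show "hs \<in> sep_star n (Delta n A) (Delta n B)"
      unfolding sep_star_def using lf by blast
  qed
next
  show "sep_star n (Delta n A) (Delta n B) \<subseteq> Delta n {heap_union f g | f g. f \<in> A \<and> g \<in> B \<and> heap_disj f g}"
  proof
    fix hs assume "hs \<in> sep_star n (Delta n A) (Delta n B)"
    then obtain fs gs where hs: "hs = map2 heap_union fs gs" and fs: "fs \<in> Delta n A"
      and gs: "gs \<in> Delta n B" and lens: "length fs = n" "length gs = n"
      and dj: "\<forall>k<n. heap_disj (fs ! k) (gs ! k)"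
      unfolding sep_star_def by blast
    obtain f where f: "f \<in> A" "\<forall>k<n. heap_le f (fs ! k)" using fs unfolding Delta_def by blast
    obtain g where g: "g \<in> B" "\<forall>k<n. heap_le g (gs ! k)" using gs unfolding Delta_def by blast
    have z: "0 < n" using assms by simp
    have d: "heap_disj f g" using disj_mono[of "fs ! 0" "gs ! 0" f g] dj f(2) g(2) z by blast
    have "\<forall>k<n. heap_le (heap_union f g) (hs ! k)"
    proof (intro allI impI)
      fix k assume k: "k < n"
      have "heap_le (heap_union f g) (heap_union (fs ! k) (gs ! k))"
        using union_mono dj f(2) g(2) k by blast
      then show "heap_le (heap_union f g) (hs ! k)" using hs lens k by simp
    qed
    moreover have "length hs = n" using hs lens by simp
    moreover have "heap_union f g \<in> {heap_union f g | f g. f \<in> A \<and> g \<in> B \<and> heap_disj f g}"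
      using f(1) g(1) d by blast
    ultimately show "hs \<in> Delta n {heap_union f g | f g. f \<in> A \<and> g \<in> B \<and> heap_disj f g}"
      unfolding Delta_def by blast
  qed
qed

theorem mainTheorem2:
  fixes prim :: "'p \<Rightarrow> ('v \<Rightarrow> int) \<Rightarrow> heap set"
    and \<phi> :: "('p, 'v, 'a) assn"
    and \<eta> :: "'v \<Rightarrow> int"
    and \<rho> \<rho>' :: "'a \<Rightarrow> heap list set"
    and n :: nat
  assumes "n \<ge> 1"
    and "\<And>a. \<rho> a \<in> IRel 1"
    and "\<And>a. \<rho>' a \<in> IRel n"
    and "\<And>a. Delta n (unary (\<rho> a)) = \<rho>' a"
  shows "Delta n (unary (sem prim 1 \<eta> \<rho> \<phi>)) = sem prim n \<eta> \<rho>' \<phi>"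
proof (induction \<phi> arbitrary: \<eta>)
  case (Prim x)
  have "Delta n {h. \<exists>f\<in>prim x \<eta>. heap_le f h} = Delta n (prim x \<eta>)"
  proof (rule set_eqI, rule iffI)
    fix hs assume "hs \<in> Delta n {h. \<exists>f\<in>prim x \<eta>. heap_le f h}"
    then obtain g f where "length hs = n" "f \<in> prim x \<eta>" "heap_le f g" "\<forall>k<n. heap_le g (hs ! k)"
      unfolding Delta_def by blast
    then show "hs \<in> Delta n (prim x \<eta>)" unfolding Delta_def using heap_le_trans by blast
  next
    fix hs assume "hs \<in> Delta n (prim x \<eta>)"
    then obtain f where "length hs = n" "f \<in> prim x \<eta>" "\<forall>k<n. heap_le f (hs ! k)"
      unfolding Delta_def by blast
    then show "hs \<in> Delta n {h. \<exists>f\<in>prim x \<eta>. heap_le f h}" unfolding Delta_def using heap_le_refl by blast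
  qed
  then show ?case by (simp add: unary_Delta1)
next
  case (AVar x)
  then show ?case using assms(4) by simp
next
  case ATrue
  then show ?case unfolding Delta_def unary_def
    by (auto simp: HeapN_def intro!: exI[of _ heap_empty] heap_le_empty)
next
  case AFalse
  then show ?case unfolding Delta_def unary_def by auto
next
  case (AAnd \<phi>1 \<phi>2)
  have "unary (sem prim 1 \<eta> \<rho> (AAnd \<phi>1 \<phi>2)) = unary (sem prim 1 \<eta> \<rho> \<phi>1) \<inter> unary (sem prim 1 \<eta> \<rho> \<phi>2)"
    unfolding unary_def by auto
  moreover have "Delta n (unary (sem prim 1 \<eta> \<rho> \<phi>1) \<inter> unary (sem prim 1 \<eta> \<rho> \<phi>2))
     = Delta n (unary (sem prim 1 \<eta> \<rho> \<phi>1)) \<inter> Delta n (unary (sem prim 1 \<eta> \<rho> \<phi>2))"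
    by (rule Delta_Int[OF assms(1) sem1_upc[OF assms(2)] sem1_upc[OF assms(2)]])
  ultimately show ?case using AAnd.IH by simp
next
  case (AOr \<phi>1 \<phi>2)
  have "unary (sem prim 1 \<eta> \<rho> (AOr \<phi>1 \<phi>2)) = unary (sem prim 1 \<eta> \<rho> \<phi>1) \<union> unary (sem prim 1 \<eta> \<rho> \<phi>2)"
    unfolding unary_def by auto
  moreover have "Delta n (A \<union> B) = Delta n A \<union> Delta n B" for A B unfolding Delta_def by auto
  ultimately show ?case using AOr by simp
next
  case (AStar \<phi>1 \<phi>2)
  then show ?case using Delta_star[OF assms(1)] by (simp add: unary_star)
next
  case (AEx x \<phi>)
  have "unary (sem prim 1 \<eta> \<rho> (AEx x \<phi>)) = (\<Union>v. unary (sem prim 1 (\<eta>(x:=v)) \<rho> \<phi>))"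
    unfolding unary_def by auto
  moreover have "Delta n (\<Union>v. X v) = (\<Union>v. Delta n (X v))" for X :: "int \<Rightarrow> heap set"
    unfolding Delta_def by auto
  ultimately have "Delta n (unary (sem prim 1 \<eta> \<rho> (AEx x \<phi>))) = (\<Union>v. Delta n (unary (sem prim 1 (\<eta>(x:=v)) \<rho> \<phi>)))"
    by presburger
  also have "\<dots> = (\<Union>v. sem prim n (\<eta>(x:=v)) \<rho>' \<phi>)" using AEx.IH by presburger
  finally show ?case by (simp only: sem.simps)
next
  case (AAll x \<phi>)
  have "unary (sem prim 1 \<eta> \<rho> (AAll x \<phi>)) = (\<Inter>v. unary (sem prim 1 (\<eta>(x:=v)) \<rho> \<phi>))"
    unfolding unary_def by auto
  then have "Delta n (unary (sem prim 1 \<eta> \<rho> (AAll x \<phi>))) = (\<Inter>v. Delta n (unary (sem prim 1 (\<eta>(x:=v)) \<rho> \<phi>)))"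
    using Delta_Inter[of n "\<lambda>v. unary (sem prim 1 (\<eta>(x:=v)) \<rho> \<phi>)", OF assms(1) sem1_upc[OF assms(2)]] by presburger
  also have "\<dots> = (\<Inter>v. sem prim n (\<eta>(x:=v)) \<rho>' \<phi>)" using AAll.IH by presburger
  finally show ?case by (simp only: sem.simps)
qed

end
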